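(* Let $(\mathbb{F}(t),\sigma)$ be a $\Pi\Sigma$-extension of a difference field $(\mathbb{F},\sigma)$, and let $A=A_\ell\sigma^\ell+\dots+A_1\sigma+A_0\in\mathbb{F}(t)[\sigma]^{n\times n}$ with $A_0,\dots,A_\ell\in\mathbb{F}(t)^{n\times n}$ and $\det A_\ell\ne0$. Then there exist $\tilde\ell\in\mathbb{N}$ and a unimodular $V\in\mathrm{GL}_n(\mathbb{F}(t)[\sigma,\sigma^{-1}])$ such that $VA=\sum_{i=0}^{\tilde\ell}B_i\sigma^i\in\mathbb{F}(t)[\sigma]^{n\times n}$ with $\det B_0\ne0$. Consequently every head regular system $A(y)=b$ is fully regular.
   Context: A difference field $(\mathbb{F},\sigma)$ is a field (containing $\mathbb{Q}$) with an automorphism $\sigma$; in a $\Pi\Sigma$-extension $(\mathbb{F}(t),\sigma)$, $\sigma$ extends to the rational function field with $\sigma(t)=t+\beta$ or $\sigma(t)=\alpha t$ ($\alpha,\beta\in\mathbb{F}\setminus\{0\}$) and no new constants. $\mathbb{F}(t)[\sigma]$ is the Ore polynomial ring of polynomials $\sum a_i\sigma^i$ ($a_i\in\mathbb{F}(t)$) with multiplication determined by $\sigma a=\sigma(a)\sigma$; $\mathbb{F}(t)[\sigma,\sigma^{-1}]$ is its localisation at powers of $\sigma$. Unimodular means having a two-sided inverse over the same ring. A square system $A(y)=b$, $A=\sum_{i=0}^\ell A_i\sigma^i$, is head regular if $\det A_\ell\ne0$, and fully regular if it is head regular and there is a unimodular $V$ over $\mathbb{F}(t)[\sigma,\sigma^{-1}]$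 with $VA\in\mathbb{F}(t)[\sigma]^{n\times n}$ whose coefficient of $\sigma^0$ has nonzero determinant. *)

theory Defs
  imports "HOL-Analysis.Determinants" "HOL-Computational_Algebra.Polynomial"
          "HOL-Computational_Algebra.Fraction_Field"
begin

definition field_aut :: "('a::field \<Rightarrow> 'a) \<Rightarrow> bool" where
  "field_aut f \<longleftrightarrow> bij f \<and> f 1 = 1 \<and> (\<forall>x y. f (x + y) = f x + f y) \<and> (\<forall>x y. f (x * y) = f x * f y)"

type_synonym 'a ratfun = "'a poly fract"

definition rconst :: "'a::field \<Rightarrow> 'a ratfun" where
  "rconst c = Fract [:c:] 1"

definition tvar :: "'a::field ratfun" where
  "tvar = Fract [:0, 1:] 1"

definition PiSigma_ext :: "('a::field_char_0 \<Rightarrow> 'a) \<Rightarrow> ('a ratfun \<Rightarrow> 'a ratfun) \<Rightarrow> bool" where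
  "PiSigma_ext sF s \<longleftrightarrow>
     field_aut sF \<and> field_aut s \<and> (\<forall>c. s (rconst c) = rconst (sF c)) \<and>
     ((\<exists>\<beta>. \<beta> \<noteq> 0 \<and> s tvar = tvar + rconst \<beta>) \<or> (\<exists>\<alpha>. \<alpha> \<noteq> 0 \<and> s tvar = rconst \<alpha> * tvar)) \<and>
     {x. s x = x} = rconst ` {c. sF c = c}"

definition zpow :: "('a \<Rightarrow> 'a) \<Rightarrow> int \<Rightarrow> 'a \<Rightarrow> 'a" where
  "zpow s k = (if k \<ge> 0 then s ^^ nat k else inv s ^^ nat (- k))"

definition map_matrix :: "('a \<Rightarrow> 'a) \<Rightarrow> 'a ^'n ^'m \<Rightarrow> 'a ^'n ^'m" where
  "map_matrix f M = (\<chi> i j. f (M $ i $ j))"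

text \<open>An n x n matrix over K[sigma, sigma^-1] is represented by its coefficient sequence
  k \<mapsto> M_k in K^(n x n) (so M = sum_k M_k sigma^k), with finite support.\<close>
type_synonym ('k, 'n) lmat = "int \<Rightarrow> 'k ^'n ^'n"

definition lfin :: "('k::zero, 'n::finite) lmat \<Rightarrow> bool" where
  "lfin M \<longleftrightarrow> finite {k. M k \<noteq> 0}"

definition ore_mat :: "('k::zero, 'n::finite) lmat \<Rightarrow> bool" where
  "ore_mat M \<longleftrightarrow> lfin M \<and> (\<forall>k<0. M k = 0)"

text \<open>Product, using sigma a = sigma(a) sigma:
  (sum_i V_i sigma^i)(sum_j W_j sigma^j) = sum_k (sum_i V_i sigma^i(W_(k-i))) sigma^k.\<close>
definition lmult :: "('k::field \<Rightarrow> 'k) \<Rightarrow> ('k, 'n::finite) lmat \<Rightarrow> ('k, 'n) lmat \<Rightarrow> ('k, 'n) lmat" where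
  "lmult s V W = (\<lambda>k. \<Sum>i\<in>{i. V i \<noteq> 0}. V i ** map_matrix (zpow s i) (W (k - i)))"

definition lone :: "('k::field, 'n::finite) lmat" where
  "lone = (\<lambda>k. if k = 0 then mat 1 else 0)"

definition unimodular_laurent :: "('k::field \<Rightarrow> 'k) \<Rightarrow> ('k, 'n::finite) lmat \<Rightarrow> bool" where
  "unimodular_laurent s V \<longleftrightarrow> lfin V \<and>
     (\<exists>W. lfin W \<and> lmult s V W = lone \<and> lmult s W V = lone)"

definition head_regular :: "('k::field, 'n::finite) lmat \<Rightarrow> nat \<Rightarrow> bool" where
  "head_regular A l \<longleftrightarrow> (\<forall>k. k < 0 \<or> k > int l \<longrightarrow> A k = 0) \<and> det (A (int l)) \<noteq> 0"

definition fully_regular :: "('k::field \<Rightarrow> 'k) \<Rightarrow> ('k, 'n::finite) lmat \<Rightarrow> nat \<Rightarrow> bool" where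
  "fully_regular s A l \<longleftrightarrow> head_regular A l \<and>
     (\<exists>V. unimodular_laurent s V \<and> ore_mat (lmult s V A) \<and> det (lmult s V A 0) \<noteq> 0)"

end

theory Submission
  imports Defs
begin


definition rhom :: "('a::field \<Rightarrow> 'a) \<Rightarrow> bool" where
  "rhom f \<longleftrightarrow> (\<forall>x y. f (x + y) = f x + f y) \<and> (\<forall>x y. f (x * y) = f x * f y) \<and> f 1 = 1"

lemma rhom_add: "rhom f \<Longrightarrow> f (x + y) = f x + f y" by (simp add: rhom_def)
lemma rhom_mult: "rhom f \<Longrightarrow> f (x * y) = f x * f y" by (simp add: rhom_def)
lemma rhom_1: "rhom f \<Longrightarrow> f 1 = 1" by (simp add: rhom_def)
lemma rhom_0: "rhom f \<Longrightarrow> f 0 = 0"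
proof -
  assume "rhom f"
  then have "f 0 + 0 = f 0 + f 0" using rhom_add[of f 0 0] by simp
  then have "0 = f 0" by (rule add_left_imp_eq)
  then show ?thesis by simp
qed
lemma rhom_neg: "rhom f \<Longrightarrow> f (- x) = - f x"
  using rhom_add[of f x "-x"] rhom_0[of f] by (metis add.inverse_unique right_minus)
lemma rhom_sum: "rhom f \<Longrightarrow> f (sum g S) = sum (\<lambda>x. f (g x)) S"
  by (induction S rule: infinite_finite_induct) (auto simp: rhom_0 rhom_add)
lemma rhom_prod: "rhom f \<Longrightarrow> f (prod g S) = prod (\<lambda>x. f (g x)) S"
  by (induction S rule: infinite_finite_induct) (auto simp: rhom_1 rhom_mult)
lemma rhom_of_nat: "rhom f \<Longrightarrow> f (of_nat n) = of_nat n"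
  by (induction n) (auto simp: rhom_0 rhom_1 rhom_add)
lemma rhom_of_int: "rhom f \<Longrightarrow> f (of_int k) = of_int k"
proof -
  assume r: "rhom f"
  have "k = int (nat k) \<or> k = - int (nat (-k))" by linarith
  then show ?thesis
  proof
    assume "k = int (nat k)"
    then show ?thesis using r by (metis of_int_of_nat_eq rhom_of_nat)
  next
    assume "k = - int (nat (-k))"
    then show ?thesis using r by (metis of_int_minus of_int_of_nat_eq rhom_of_nat rhom_neg)
  qed
qed

lemma map_matrix_nth[simp]: "map_matrix f M $ i $ j = f (M $ i $ j)"
  by (simp add: map_matrix_def)

lemma map_matrix_mult: "rhom f \<Longrightarrow> map_matrix f (M ** N) = map_matrix f M ** map_matrix f N"
  by (simp add: vec_eq_iff matrix_matrix_mult_def rhom_sum rhom_mult)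
lemma map_matrix_add: "rhom f \<Longrightarrow> map_matrix f (M + N) = map_matrix f M + map_matrix f N"
  by (simp add: vec_eq_iff rhom_add)
lemma map_matrix_0[simp]: "rhom f \<Longrightarrow> map_matrix f 0 = 0"
  by (simp add: vec_eq_iff rhom_0)
lemma map_matrix_mat1: "rhom f \<Longrightarrow> map_matrix f (mat 1) = mat 1"
  by (simp add: vec_eq_iff mat_def rhom_0 rhom_1)
lemma map_matrix_sum: "rhom f \<Longrightarrow> map_matrix f (sum g S) = sum (\<lambda>x. map_matrix f (g x)) S"
  by (induction S rule: infinite_finite_induct) (auto simp: map_matrix_add)
lemma map_matrix_comp: "map_matrix f (map_matrix g M) = map_matrix (\<lambda>x. f (g x)) M"
  by (simp add: vec_eq_iff)
lemma map_matrix_id: "map_matrix (\<lambda>x. x) M = M"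
  by (simp add: vec_eq_iff)
lemma det_map_matrix: "rhom f \<Longrightarrow> det (map_matrix f M) = f (det M)"
  by (simp add: det_def rhom_sum rhom_mult rhom_prod rhom_of_int)

lemma field_aut_rhom: "field_aut s \<Longrightarrow> rhom s"
  by (simp add: field_aut_def rhom_def)

lemma field_aut_inv_rhom:
  assumes "field_aut s" shows "rhom (inv s)"
proof -
  have b: "bij s" using assms by (simp add: field_aut_def)
  have sinv: "\<And>x. s (inv s x) = x" using b by (simp add: bij_is_surj surj_f_inv_f)
  have invs: "\<And>x. inv s (s x) = x" using b by (simp add: bij_is_inj)
  have "\<And>x y. inv s (x + y) = inv s x + inv s y"
  proof -
    fix x y
    have "x + y = s (inv s x + inv s y)" using assms sinv by (simp add: field_aut_def)
    then show "inv s (x + y) = inv s x + inv s y" using invs by metis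
  qed
  moreover have "\<And>x y. inv s (x * y) = inv s x * inv s y"
  proof -
    fix x y
    have "x * y = s (inv s x * inv s y)" using assms sinv by (simp add: field_aut_def)
    then show "inv s (x * y) = inv s x * inv s y" using invs by metis
  qed
  moreover have "inv s 1 = 1" using assms invs by (metis field_aut_def)
  ultimately show ?thesis by (simp add: rhom_def)
qed

lemma rhom_funpow: "rhom f \<Longrightarrow> rhom (f ^^ n)"
  by (induction n) (auto simp: rhom_def)

lemma zpow_rhom: "field_aut s \<Longrightarrow> rhom (zpow s k)"
  by (simp add: zpow_def rhom_funpow field_aut_rhom field_aut_inv_rhom)

lemma zpow_0[simp]: "zpow s 0 = id"
  by (simp add: zpow_def)

lemma zpow_succ:
  assumes "field_aut s" shows "zpow s (k + 1) = s \<circ> zpow s k"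
proof -
  have b: "bij s" using assms by (simp add: field_aut_def)
  have sinv: "s \<circ> inv s = id" using b by (metis bij_is_surj surj_iff)
  consider "k \<ge> 0" | "k = -1" | "k < -1" by linarith
  then show ?thesis
  proof cases
    case 1
    then have "nat (k+1) = Suc (nat k)" by simp
    then show ?thesis using 1 by (simp add: zpow_def)
  next
    case 2 then show ?thesis by (simp add: zpow_def sinv)
  next
    case 3
    then have "nat (-k) = Suc (nat (-(k+1)))" by simp
    then have "zpow s k = inv s \<circ> zpow s (k+1)" using 3 by (simp add: zpow_def)
    then show ?thesis using sinv by (simp add: comp_assoc[symmetric])
  qed
qed

lemma zpow_pred:
  assumes "field_aut s" shows "zpow s (k - 1) = inv s \<circ> zpow s k"
proof -
  have b: "bij s" using assms by (simp add: field_aut_def)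
  have invs: "inv s \<circ> s = id" using b by (metis bij_is_inj inj_iff)
  have "zpow s k = s \<circ> zpow s (k - 1)" using zpow_succ[OF assms, of "k-1"] by simp
  then show ?thesis using invs by (simp add: comp_assoc[symmetric])
qed

lemma zpow_add:
  assumes "field_aut s" shows "zpow s (i + j) = zpow s i \<circ> zpow s j"
proof (induction i rule: int_induct[where k=0])
  case base then show ?case by simp
next
  case (step1 i)
  have "zpow s (i + 1 + j) = zpow s ((i + j) + 1)" by (simp add: ac_simps)
  also have "\<dots> = s \<circ> zpow s (i + j)" by (rule zpow_succ[OF assms])
  finally show ?case using step1 zpow_succ[OF assms, of i] by (simp add: comp_assoc)
next
  case (step2 i)
  have "zpow s (i - 1 + j) = zpow s ((i + j) - 1)" by (simp add: algebra_simps)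
  also have "\<dots> = inv s \<circ> zpow s (i + j)" by (rule zpow_pred[OF assms])
  finally show ?case using step2 zpow_pred[OF assms, of i] by (simp add: comp_assoc)
qed

lemma zpow_add_apply: "field_aut s \<Longrightarrow> zpow s i (zpow s j x) = zpow s (i + j) x"
  by (simp add: zpow_add)



lemma mmul_0l[simp]: "(0::'a::semiring_1^'n^'m) ** (B::'a^'p^'n) = 0"
  by (simp add: vec_eq_iff matrix_matrix_mult_def)
lemma mmul_0r[simp]: "(A::'a::semiring_1^'n^'m) ** (0::'a^'p^'n) = 0"
  by (simp add: vec_eq_iff matrix_matrix_mult_def)
lemma mmul_sum_left: "(sum f S) ** (B::'a::semiring_1^'p^'n) = sum (\<lambda>i. (f i :: 'a^'n^'m) ** B) S"
  by (induction S rule: infinite_finite_induct) (auto simp: vec_eq_iff matrix_matrix_mult_def sum_distrib_right sum.distrib algebra_simps)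
lemma mmul_sum_right: "(A::'a::semiring_1^'n^'m) ** (sum f S) = sum (\<lambda>i. A ** (f i :: 'a^'p^'n)) S"
  by (induction S rule: infinite_finite_induct) (auto simp: matrix_add_ldistrib)

lemma map_matrix_id': "map_matrix id M = M"
  by (simp add: vec_eq_iff)

definition supp :: "('k::zero, 'n::finite) lmat \<Rightarrow> int set" where
  "supp M = {k. M k \<noteq> 0}"

lemma lfin_supp: "lfin M \<longleftrightarrow> finite (supp M)" by (simp add: lfin_def supp_def)

lemma lmult_sum:
  assumes "finite S" "supp V \<subseteq> S"
  shows "lmult s V W k = (\<Sum>i\<in>S. V i ** map_matrix (zpow s i) (W (k - i)))"
  unfolding lmult_def
  by (rule sum.mono_neutral_left) (use assms in \<open>auto simp: supp_def\<close>)

definition psum :: "int set \<Rightarrow> int set \<Rightarrow> int set" where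
  "psum S T = (\<lambda>(i,j). i + j) ` (S \<times> T)"

lemma finite_psum: "finite S \<Longrightarrow> finite T \<Longrightarrow> finite (psum S T)"
  by (simp add: psum_def)

lemma supp_lmult:
  assumes "lfin V" "lfin W" "field_aut s"
  shows "supp (lmult s V W) \<subseteq> psum (supp V) (supp W)"
proof
  fix a assume a: "a \<in> supp (lmult s V W)"
  show "a \<in> psum (supp V) (supp W)"
  proof (rule ccontr)
    assume na: "a \<notin> psum (supp V) (supp W)"
    have "lmult s V W a = (\<Sum>i\<in>supp V. V i ** map_matrix (zpow s i) (W (a - i)))"
      using assms by (intro lmult_sum) (auto simp: lfin_supp)
    also have "\<dots> = 0"
    proof (rule sum.neutral, rule ballI)
      fix i assume i: "i \<in> supp V"
      have "W (a - i) = 0"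
      proof (rule ccontr)
        assume "W (a - i) \<noteq> 0"
        then have "a - i \<in> supp W" by (simp add: supp_def)
        then have "a \<in> psum (supp V) (supp W)" using i unfolding psum_def
          by (auto intro!: image_eqI[where x="(i, a - i)"])
        then show False using na by simp
      qed
      then show "V i ** map_matrix (zpow s i) (W (a - i)) = 0"
        using zpow_rhom[OF assms(3)] by simp
    qed
    finally show False using a by (simp add: supp_def)
  qed
qed

lemma lfin_lmult:
  assumes "lfin V" "lfin W" "field_aut s"
  shows "lfin (lmult s V W)"
  using supp_lmult[OF assms] assms unfolding lfin_supp
  by (meson finite_psum finite_subset)

lemma lmult_assoc:
  assumes V: "lfin V" and W: "lfin W" and s: "field_aut s"
  shows "lmult s (lmult s V W) X = lmult s V (lmult s W X)"
proof
  fix k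
  let ?S = "supp V" and ?T = "supp W"
  let ?P = "psum ?S ?T"
  have fS: "finite ?S" and fT: "finite ?T" using V W by (auto simp: lfin_supp)
  have fP: "finite ?P" using fS fT by (rule finite_psum)
  have rh: "\<And>i. rhom (zpow s i)" using s by (rule zpow_rhom)
  have "lmult s (lmult s V W) X k = (\<Sum>a\<in>?P. lmult s V W a ** map_matrix (zpow s a) (X (k - a)))"
    by (rule lmult_sum[OF fP supp_lmult[OF V W s]])
  also have "\<dots> = (\<Sum>a\<in>?P. \<Sum>i\<in>?S. (V i ** map_matrix (zpow s i) (W (a - i))) ** map_matrix (zpow s a) (X (k - a)))"
    by (simp add: lmult_sum[OF fS] mmul_sum_left)
  also have "\<dots> = (\<Sum>i\<in>?S. \<Sum>a\<in>?P. (V i ** map_matrix (zpow s i) (W (a - i))) ** map_matrix (zpow s a) (X (k - a)))"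
    by (rule sum.swap)
  also have "\<dots> = (\<Sum>i\<in>?S. \<Sum>j\<in>?T. V i ** map_matrix (zpow s i) (W j ** map_matrix (zpow s j) (X (k - i - j))))"
  proof (rule sum.cong[OF refl])
    fix i assume i: "i \<in> ?S"
    let ?g = "\<lambda>a. (V i ** map_matrix (zpow s i) (W (a - i))) ** map_matrix (zpow s a) (X (k - a))"
    have sub: "(\<lambda>j. i + j) ` ?T \<subseteq> ?P" using i unfolding psum_def by auto
    have "(\<Sum>a\<in>?P. ?g a) = (\<Sum>a\<in>(\<lambda>j. i + j) ` ?T. ?g a)"
    proof (rule sum.mono_neutral_right[OF fP sub], rule ballI)
      fix a assume "a \<in> ?P - (\<lambda>j. i + j) ` ?T"
      then have "a - i \<notin> ?T" by (auto intro!: image_eqI[where x="a - i"])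
      then have "W (a - i) = 0" by (simp add: supp_def)
      then show "?g a = 0" using rh by simp
    qed
    also have "\<dots> = (\<Sum>j\<in>?T. ?g (i + j))"
      by (subst sum.reindex) (auto simp: inj_on_def)
    also have "\<dots> = (\<Sum>j\<in>?T. V i ** map_matrix (zpow s i) (W j ** map_matrix (zpow s j) (X (k - i - j))))"
    proof (rule sum.cong[OF refl])
      fix j
      have "map_matrix (zpow s i) (W j ** map_matrix (zpow s j) (X (k - i - j)))
          = map_matrix (zpow s i) (W j) ** map_matrix (zpow s (i + j)) (X (k - i - j))"
        using rh s by (simp add: map_matrix_mult map_matrix_comp zpow_add_apply)
      then show "?g (i + j) = V i ** map_matrix (zpow s i) (W j ** map_matrix (zpow s j) (X (k - i - j)))"
        by (simp add: matrix_mul_assoc algebra_simps)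
    qed
    finally show "(\<Sum>a\<in>?P. ?g a) = (\<Sum>j\<in>?T. V i ** map_matrix (zpow s i) (W j ** map_matrix (zpow s j) (X (k - i - j))))" .
  qed
  also have "\<dots> = lmult s V (lmult s W X) k"
    using rh by (simp add: lmult_sum[OF fS] lmult_sum[OF fT] map_matrix_sum mmul_sum_right algebra_simps)
  finally show "lmult s (lmult s V W) X k = lmult s V (lmult s W X) k" .
qed

lemma supp_lone: "supp lone = {0}"
  by (auto simp: supp_def lone_def vec_eq_iff mat_def)

lemma lfin_lone: "lfin lone" by (simp add: lfin_supp supp_lone)

lemma lmult_lone_left: "lmult s lone X = X"
proof
  fix k
  have "lmult s lone X k = (\<Sum>i\<in>{0}. lone i ** map_matrix (zpow s i) (X (k - i)))"
    by (rule lmult_sum) (auto simp: supp_lone)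
  then show "lmult s lone X k = X k" by (simp add: lone_def map_matrix_id')
qed

lemma lmult_lone_right:
  assumes "lfin X" "field_aut s"
  shows "lmult s X lone = X"
proof
  fix k
  have f: "finite (insert k (supp X))" using assms by (simp add: lfin_supp)
  have "lmult s X lone k = (\<Sum>i\<in>insert k (supp X). X i ** map_matrix (zpow s i) (lone (k - i)))"
    by (rule lmult_sum[OF f]) auto
  also have "\<dots> = (\<Sum>i\<in>insert k (supp X). if i = k then X k else 0)"
    by (rule sum.cong) (auto simp: lone_def map_matrix_mat1 zpow_rhom[OF assms(2)])
  also have "\<dots> = X k" using f by simp
  finally show "lmult s X lone k = X k" .
qed

lemma unimodular_mult:
  assumes s: "field_aut s" and U: "unimodular_laurent s U" and V: "unimodular_laurent s V"
  shows "unimodular_laurent s (lmult s U V)"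
proof -
  obtain U' where U': "lfin U'" "lmult s U U' = lone" "lmult s U' U = lone" "lfin U"
    using U by (auto simp: unimodular_laurent_def)
  obtain V' where V': "lfin V'" "lmult s V V' = lone" "lmult s V' V = lone" "lfin V"
    using V by (auto simp: unimodular_laurent_def)
  have "lmult s (lmult s U V) (lmult s V' U') = lmult s U (lmult s V (lmult s V' U'))"
    using U' V' s by (simp add: lmult_assoc)
  also have "\<dots> = lmult s U (lmult s (lmult s V V') U')"
    using lmult_assoc[OF V'(4) V'(1) s, of U'] by simp
  also have "\<dots> = lone" using U' V' by (simp add: lmult_lone_left)
  finally have 1: "lmult s (lmult s U V) (lmult s V' U') = lone" .
  have "lmult s (lmult s V' U') (lmult s U V) = lmult s V' (lmult s U' (lmult s U V))"
    using U' V' s by (simp add: lmult_assoc)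
  also have "\<dots> = lmult s V' (lmult s (lmult s U' U) V)"
    using lmult_assoc[OF U'(1) U'(4) s, of V] by simp
  also have "\<dots> = lone" using U' V' by (simp add: lmult_lone_left)
  finally have 2: "lmult s (lmult s V' U') (lmult s U V) = lone" .
  show ?thesis unfolding unimodular_laurent_def
    using 1 2 U' V' s by (intro conjI exI[of _ "lmult s V' U'"]) (auto simp: lfin_lmult)
qed



lemma vmul_nth: "(x v* M) $ c = (\<Sum>j\<in>UNIV. x $ j * M $ j $ c)"
  by (simp add: vector_matrix_mult_def)

lemma row_mmul: "(A ** B) $ i = (A $ i) v* B"
  by (simp add: vec_eq_iff matrix_matrix_mult_def vector_matrix_mult_def)

lemma unit_vmul: "(\<chi> j. if i = j then 1 else 0) v* (M::'a::semiring_1^'n^'m) = M $ i"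
  by (simp add: vec_eq_iff vector_matrix_mult_def if_distrib[of "\<lambda>x. x * _"] cong: if_cong)

definition map_vec :: "('a \<Rightarrow> 'a) \<Rightarrow> 'a^'n \<Rightarrow> 'a^'n" where
  "map_vec f v = (\<chi> c. f (v $ c))"

lemma rhom_inj0: "rhom f \<Longrightarrow> f (x::'a::field) = 0 \<Longrightarrow> x = 0"
proof (rule ccontr)
  assume r: "rhom f" and fx: "f x = 0" and x: "x \<noteq> 0"
  have "f (x * inverse x) = 1" using x r by (simp add: rhom_1)
  then show False using fx r by (simp add: rhom_mult)
qed

lemma map_vec_eq0: "rhom f \<Longrightarrow> map_vec f v = 0 \<longleftrightarrow> v = 0"
  by (auto simp: map_vec_def vec_eq_iff rhom_0 dest: rhom_inj0)

lemma map_matrix_row: "map_matrix f M $ r = map_vec f (M $ r)"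
  by (simp add: vec_eq_iff map_vec_def)

lemma lmult_row:
  assumes "finite S" "supp V \<subseteq> S"
  shows "lmult s V W k $ r = (\<Sum>i\<in>S. (V i $ r) v* map_matrix (zpow s i) (W (k - i)))"
  by (simp add: lmult_sum[OF assms] row_mmul)

section \<open>Diagonal shifts\<close>

definition Dsh :: "('n::finite \<Rightarrow> int) \<Rightarrow> ('k::field, 'n) lmat" where
  "Dsh e k = (\<chi> i j. if i = j \<and> k = e i then 1 else 0)"

lemma supp_Dsh: "supp (Dsh e) \<subseteq> range e"
  by (auto simp: supp_def Dsh_def vec_eq_iff split: if_splits)

lemma lfin_Dsh: "lfin (Dsh e)"
  using supp_Dsh[of e] finite_subset[OF supp_Dsh[of e]] by (simp add: lfin_supp)

lemma Dsh_row:
  "lmult s (Dsh e) X k $ r = map_vec (zpow s (e r)) (X (k - e r) $ r)"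
proof -
  have "lmult s (Dsh e) X k $ r = (\<Sum>i\<in>range e. (Dsh e i $ r) v* map_matrix (zpow s i) (X (k - i)))"
    by (rule lmult_row[OF _ supp_Dsh]) simp
  also have "\<dots> = (\<Sum>i\<in>range e. if i = e r then (\<chi> j. if r = j then 1 else 0) v* map_matrix (zpow s i) (X (k - i)) else 0)"
    by (rule sum.cong) (auto simp: Dsh_def vec_eq_iff vector_matrix_mult_def)
  also have "\<dots> = map_vec (zpow s (e r)) (X (k - e r) $ r)"
    by (simp add: unit_vmul map_matrix_row)
  finally show ?thesis .
qed

lemma Dsh_inv:
  assumes "field_aut s"
  shows "lmult s (Dsh e) (Dsh (\<lambda>i. - e i)) = lone"
proof (rule ext)
  fix k
  have r: "rhom (zpow s (e i))" for i using assms by (rule zpow_rhom)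
  show "lmult s (Dsh e) (Dsh (\<lambda>i. - e i)) k = lone k"
    unfolding vec_eq_iff
  proof (intro allI)
    fix i j
    show "lmult s (Dsh e) (Dsh (\<lambda>i. - e i)) k $ i $ j = lone k $ i $ j"
      using r[of i] by (auto simp: Dsh_row map_vec_def Dsh_def lone_def mat_def rhom_0 rhom_1)
  qed
qed

lemma unimodular_Dsh:
  assumes "field_aut s"
  shows "unimodular_laurent s (Dsh e)"
  unfolding unimodular_laurent_def
  using Dsh_inv[OF assms, of e] Dsh_inv[OF assms, of "\<lambda>i. - e i"]
  by (intro conjI exI[of _ "Dsh (\<lambda>i. - e i)"]) (auto simp: lfin_Dsh)

definition Cst :: "'k::field^'n^'n \<Rightarrow> ('k, 'n::finite) lmat" where
  "Cst E k = (if k = 0 then E else 0)"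

lemma supp_Cst: "supp (Cst E) \<subseteq> {0}"
  by (auto simp: supp_def Cst_def)

lemma lfin_Cst: "lfin (Cst E)"
  using supp_Cst[of E] by (simp add: lfin_supp finite_subset)

lemma Cst_mult: "lmult s (Cst E) X k = E ** X k"
proof -
  have "lmult s (Cst E) X k = (\<Sum>i\<in>{0}. Cst E i ** map_matrix (zpow s i) (X (k - i)))"
    by (rule lmult_sum[OF _ supp_Cst]) simp
  then show ?thesis by (simp add: Cst_def map_matrix_id')
qed

lemma unimodular_Cst:
  assumes "E ** F = mat 1" "F ** E = mat 1"
  shows "unimodular_laurent s (Cst E)"
proof -
  have "lmult s (Cst E) (Cst F) = lone" "lmult s (Cst F) (Cst E) = lone"
    using assms by (auto simp: Cst_mult Cst_def lone_def)
  then show ?thesis unfolding unimodular_laurent_def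
    by (intro conjI exI[of _ "Cst F"]) (auto simp: lfin_Cst)
qed

lemma unimodular_lone: "unimodular_laurent s lone"
  unfolding unimodular_laurent_def
  by (intro conjI exI[of _ lone]) (auto simp: lfin_lone lmult_lone_left)



lemma lfin_A:
  assumes "\<forall>k. k < 0 \<or> k > int l \<longrightarrow> A k = 0"
  shows "lfin A"
proof -
  have "supp A \<subseteq> {0..int l}" using assms by (force simp: supp_def)
  then show ?thesis by (simp add: lfin_supp finite_subset)
qed

lemma vmul_invertible_zero:
  assumes "det M \<noteq> (0::'a::field)" "x v* M = 0"
  shows "x = 0"
proof -
  obtain N where "M ** N = mat 1" using assms(1) by (metis invertible_det_nz invertible_def)
  then have "x = (x v* M) v* N" by (simp add: vector_matrix_mul_assoc)
  then show ?thesis using assms(2) by simp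
qed

lemma row_nonzero:
  assumes s: "field_aut s"
    and hA: "\<forall>k. k < 0 \<or> k > int l \<longrightarrow> A k = 0"
    and dA: "det (A (int l)) \<noteq> 0"
    and U: "unimodular_laurent s V"
  shows "\<exists>k. lmult s V A k $ r \<noteq> 0"
proof -
  obtain W where W: "lfin W" "lmult s V W = lone" and fV: "lfin V"
    using U by (auto simp: unimodular_laurent_def)
  have rh: "\<And>i. rhom (zpow s i)" using s by (rule zpow_rhom)
  have fS: "finite (supp V)" using fV by (simp add: lfin_supp)
  let ?H = "{i. V i $ r \<noteq> 0}"
  have HS: "?H \<subseteq> supp V" by (auto simp: supp_def)
  have fH: "finite ?H" using fS HS finite_subset by blast
  have neH: "?H \<noteq> {}"
  proof
    assume e: "?H = {}"
    have "lmult s V W 0 $ r = (\<Sum>i\<in>supp V. (V i $ r) v* map_matrix (zpow s i) (W (0 - i)))"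
      by (rule lmult_row[OF fS]) simp
    also have "\<dots> = 0" using e by (auto intro!: sum.neutral)
    finally have "lone 0 $ r = (0::'a^'b)" using W by simp
    then have "lone 0 $ r $ r = (0::'a)" by simp
    then show False by (simp add: lone_def mat_def)
  qed
  define h where "h = Max ?H"
  have hH: "h \<in> ?H" unfolding h_def using fH neH by (rule Max_in)
  have hS: "h \<in> supp V" using hH HS by blast
  have "lmult s V A (h + int l) $ r = (\<Sum>i\<in>supp V. (V i $ r) v* map_matrix (zpow s i) (A (h + int l - i)))"
    by (rule lmult_row[OF fS]) simp
  also have "\<dots> = (\<Sum>i\<in>supp V. if i = h then (V h $ r) v* map_matrix (zpow s h) (A (int l)) else 0)"
  proof (rule sum.cong[OF refl])
    fix i assume i: "i \<in> supp V"
    show "(V i $ r) v* map_matrix (zpow s i) (A (h + int l - i)) = (if i = h then (V h $ r) v* map_matrix (zpow s h) (A (int l)) else 0)"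
    proof (cases "i = h")
      case False
      show ?thesis
      proof (cases "i \<in> ?H")
        case True
        then have "i \<le> h" unfolding h_def using fH by simp
        then have "i < h" using False by simp
        then have "A (h + int l - i) = 0" using hA by auto
        then show ?thesis using False rh by simp
      next
        case False2: False
        then show ?thesis using False by simp
      qed
    qed simp
  qed
  also have "\<dots> = (V h $ r) v* map_matrix (zpow s h) (A (int l))"
    using hS fS by simp
  finally have eq: "lmult s V A (h + int l) $ r = (V h $ r) v* map_matrix (zpow s h) (A (int l))" .
  have "det (map_matrix (zpow s h) (A (int l))) \<noteq> 0"
    using dA rh[of h] by (auto simp: det_map_matrix dest: rhom_inj0)
  then have "lmult s V A (h + int l) $ r \<noteq> 0"
    using eq hH vmul_invertible_zero by fastforce
  then show ?thesis by blast
qed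

definition rs :: "('k::zero, 'n::finite) lmat \<Rightarrow> 'n \<Rightarrow> int set" where
  "rs C r = {k. C k $ r \<noteq> 0}"

definition mu :: "('k::zero, 'n::finite) lmat \<Rightarrow> nat" where
  "mu C = (\<Sum>r\<in>UNIV. nat (Max (rs C r) - Min (rs C r)))"

lemma rs_fin_ne:
  assumes s: "field_aut s"
    and hA: "\<forall>k. k < 0 \<or> k > int l \<longrightarrow> A k = 0"
    and dA: "det (A (int l)) \<noteq> 0"
    and U: "unimodular_laurent s V"
  shows "finite (rs (lmult s V A) r)" "rs (lmult s V A) r \<noteq> {}"
proof -
  have "lfin (lmult s V A)" using U lfin_A[OF hA] s by (auto simp: unimodular_laurent_def intro: lfin_lmult)
  moreover have "rs (lmult s V A) r \<subseteq> supp (lmult s V A)" by (auto simp: rs_def supp_def)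
  ultimately show "finite (rs (lmult s V A) r)" by (auto simp: lfin_supp intro: finite_subset)
  show "rs (lmult s V A) r \<noteq> {}" using row_nonzero[OF assms] by (auto simp: rs_def)
qed



lemma Min_shift: "finite S \<Longrightarrow> S \<noteq> {} \<Longrightarrow> Min ((\<lambda>k. k - c) ` S) = Min S - (c::int)"
  by (rule mono_Min_commute[symmetric]) (auto intro: monoI)
lemma Max_shift: "finite S \<Longrightarrow> S \<noteq> {} \<Longrightarrow> Max ((\<lambda>k. k - c) ` S) = Max S - (c::int)"
  by (rule mono_Max_commute[symmetric]) (auto intro: monoI)

lemma reduce:
  assumes s: "field_aut s"
    and hA: "\<forall>k. k < 0 \<or> k > int l \<longrightarrow> A k = 0"
    and dA: "det (A (int l)) \<noteq> 0"
  shows "\<forall>V. unimodular_laurent s V \<longrightarrow> mu (lmult s V A) = m \<longrightarrow>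
           (\<exists>V'. unimodular_laurent s V' \<and> ore_mat (lmult s V' A) \<and> det (lmult s V' A 0) \<noteq> 0)"
proof (induction m rule: less_induct)
  case (less m)
  show ?case
  proof (intro allI impI)
    fix V assume U: "unimodular_laurent s V" and mC: "mu (lmult s V A) = m"
    have fA: "lfin A" using hA by (rule lfin_A)
    have fV: "lfin V" using U by (simp add: unimodular_laurent_def)
    have rh: "\<And>i. rhom (zpow s i)" using s by (rule zpow_rhom)
    define C where "C = lmult s V A"
    define oo where "oo r = Min (rs C r)" for r
    define V1 where "V1 = lmult s (Dsh (\<lambda>r. - oo r)) V"
    define C1 where "C1 = lmult s V1 A"
    have U1: "unimodular_laurent s V1"
      unfolding V1_def by (rule unimodular_mult[OF s unimodular_Dsh[OF s] U])
    have C1eq: "C1 = lmult s (Dsh (\<lambda>r. - oo r)) C"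
      unfolding C1_def V1_def C_def by (rule lmult_assoc[OF lfin_Dsh fV s])
    have C1row: "C1 k $ r = map_vec (zpow s (- oo r)) (C (k + oo r) $ r)" for k r
      unfolding C1eq by (simp add: Dsh_row)
    have finC: "finite (rs C r)" "rs C r \<noteq> {}" for r
      unfolding C_def using rs_fin_ne[OF s hA dA U] by auto
    have rsC1: "rs C1 r = (\<lambda>k. k - oo r) ` rs C r" for r
    proof -
      have "k \<in> rs C1 r \<longleftrightarrow> k + oo r \<in> rs C r" for k
        by (simp add: rs_def C1row map_vec_eq0[OF rh])
      then show ?thesis by (auto intro!: image_eqI[where x="_ + oo r"])
    qed
    have monoI: "mono (\<lambda>k::int. k - c)" for c by (auto intro: monoI)
    have MinC1: "Min (rs C1 r) = 0" for r
      unfolding rsC1 using Min_shift[OF finC(1) finC(2)] oo_def by simp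
    have MaxC1: "Max (rs C1 r) = Max (rs C r) - oo r" for r
      unfolding rsC1 using Max_shift[OF finC(1) finC(2)] by simp
    have finC1: "finite (rs C1 r)" "rs C1 r \<noteq> {}" for r
      unfolding C1_def using rs_fin_ne[OF s hA dA U1] by auto
    have muC1: "mu C1 = m"
      using mC unfolding C_def[symmetric] mu_def MinC1 MaxC1 oo_def by simp
    have neg: "C1 k = 0" if "k < 0" for k
    proof -
      have "C1 k $ r = 0" for r
      proof (rule ccontr)
        assume "C1 k $ r \<noteq> 0"
        then have "k \<in> rs C1 r" by (simp add: rs_def)
        then have "Min (rs C1 r) \<le> k" using finC1 by simp
        then show False using MinC1 that by simp
      qed
      then show ?thesis by (simp add: vec_eq_iff)
    qed
    have lfC1: "lfin C1" unfolding C1_def using U1 fA s by (auto simp: unimodular_laurent_def intro: lfin_lmult)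
    show "\<exists>V'. unimodular_laurent s V' \<and> ore_mat (lmult s V' A) \<and> det (lmult s V' A 0) \<noteq> 0"
    proof (cases "det (C1 0) = 0")
      case False
      then show ?thesis using U1 lfC1 neg unfolding C1_def ore_mat_def by blast
    next
      case True
      then have "\<not> invertible (transpose (C1 0))" by (simp add: invertible_det_nz)
      then obtain u where u: "u v* C1 0 = 0" "u \<noteq> 0"
        by (metis invertible_left_inverse matrix_left_invertible_ker transpose_matrix_vector)
      define R where "R = {r. u $ r \<noteq> 0}"
      have neR: "R \<noteq> {}" using u(2) by (auto simp: R_def vec_eq_iff)
      define T where "T = Max ((\<lambda>r. Max (rs C1 r)) ` R)"
      have "T \<in> (\<lambda>r. Max (rs C1 r)) ` R" unfolding T_def using neR by (intro Max_in) auto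
      then obtain r0 where r0: "r0 \<in> R" "Max (rs C1 r0) = T" by auto
      have Tge: "Max (rs C1 r) \<le> T" if "r \<in> R" for r unfolding T_def using that by simp
      define E where "E = (\<chi> i j. if i = r0 then u $ j else (if i = j then 1 else 0))"
      have injE: "\<forall>x. E *v x = 0 \<longrightarrow> x = 0"
      proof (intro allI impI)
        fix x assume x: "E *v x = 0"
        have xi: "x $ i = 0" if "i \<noteq> r0" for i
        proof -
          have "(E *v x) $ i = x $ i"
            using that by (simp add: E_def matrix_vector_mult_def if_distrib[of "\<lambda>y. y * _"] cong: if_cong)
          then show ?thesis using x by simp
        qed
        have "(E *v x) $ r0 = (\<Sum>j\<in>UNIV. u $ j * x $ j)"
          by (simp add: E_def matrix_vector_mult_def)
        also have "\<dots> = (\<Sum>j\<in>UNIV. if j = r0 then u $ r0 * x $ r0 else 0)"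
          by (rule sum.cong) (auto simp: xi)
        also have "\<dots> = u $ r0 * x $ r0" by simp
        finally have "u $ r0 * x $ r0 = 0" using x by simp
        then have "x $ r0 = 0" using r0(1) by (simp add: R_def)
        then show "x = 0" using xi by (metis vec_eq_iff zero_index)
      qed
      then have "invertible E" by (simp add: invertible_left_inverse matrix_left_invertible_ker)
      then obtain F where EF: "E ** F = mat 1" "F ** E = mat 1" by (auto simp: invertible_def)
      define V2 where "V2 = lmult s (Cst E) V1"
      define C2 where "C2 = lmult s V2 A"
      have U2: "unimodular_laurent s V2"
        unfolding V2_def by (rule unimodular_mult[OF s unimodular_Cst[OF EF] U1])
      have fV1: "lfin V1" using U1 by (simp add: unimodular_laurent_def)
      have C2eq: "C2 k = E ** C1 k" for k
        unfolding C2_def V2_def C1_def lmult_assoc[OF lfin_Cst fV1 s] by (simp add: Cst_mult)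
      have C2row: "C2 k $ i = (if i = r0 then u v* C1 k else C1 k $ i)" for k i
      proof (cases "i = r0")
        case True then show ?thesis by (simp add: C2eq row_mmul E_def)
      next
        case False
        then have "E $ i = (\<chi> j. if i = j then 1 else 0)" by (simp add: E_def vec_eq_iff)
        then show ?thesis using False by (simp add: C2eq row_mmul unit_vmul)
      qed
      have rsC2: "rs C2 i = rs C1 i" if "i \<noteq> r0" for i
        using that by (simp add: rs_def C2row)
      have finC2: "finite (rs C2 r)" "rs C2 r \<noteq> {}" for r
        unfolding C2_def using rs_fin_ne[OF s hA dA U2] by auto
      have sub: "rs C2 r0 \<subseteq> {1..T}"
      proof
        fix k assume k: "k \<in> rs C2 r0"
        then have nz: "u v* C1 k \<noteq> 0" by (simp add: rs_def C2row)
        have "k \<ge> 1"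
        proof (rule ccontr)
          assume "\<not> k \<ge> 1"
          then have "k = 0 \<or> k < 0" by linarith
          then show False using nz u(1) neg by auto
        qed
        moreover have "k \<le> T"
        proof (rule ccontr)
          assume kT: "\<not> k \<le> T"
          have "u v* C1 k = 0"
          proof (rule iffD2[OF vec_eq_iff], rule allI)
            fix c
            have "(u v* C1 k) $ c = (\<Sum>j\<in>UNIV. u $ j * C1 k $ j $ c)" by (rule vmul_nth)
            also have "\<dots> = 0"
            proof (rule sum.neutral, rule ballI)
              fix j
              show "u $ j * C1 k $ j $ c = 0"
              proof (cases "j \<in> R")
                case True
                have "C1 k $ j = 0"
                proof (rule ccontr)
                  assume "C1 k $ j \<noteq> 0"
                  then have "k \<in> rs C1 j" by (simp add: rs_def)
                  then have "k \<le> Max (rs C1 j)" using finC1 by simp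
                  then show False using Tge[OF True] kT by simp
                qed
                then show ?thesis by simp
              next
                case False then show ?thesis by (simp add: R_def)
              qed
            qed
            finally show "(u v* C1 k) $ c = 0 $ c" by simp
          qed
          then show False using nz by simp
        qed
        ultimately show "k \<in> {1..T}" by simp
      qed
      have i1: "Min (rs C2 r0) \<in> rs C2 r0" using finC2 by (intro Min_in)
      have i2: "Max (rs C2 r0) \<in> rs C2 r0" using finC2 by (intro Max_in)
      have b1: "1 \<le> Min (rs C2 r0)" using sub i1 by auto
      have b2: "Max (rs C2 r0) \<le> T" using sub i2 by auto
      have b3: "Min (rs C2 r0) \<le> Max (rs C2 r0)" using Min_le[OF finC2(1) i2] .
      have lt: "nat (Max (rs C2 r0) - Min (rs C2 r0)) < nat (Max (rs C1 r0) - Min (rs C1 r0))"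
        unfolding r0(2) MinC1[of r0] using b1 b2 b3 by linarith
      have "mu C2 < mu C1"
        unfolding mu_def
      proof (rule sum_strict_mono_ex1)
        show "\<forall>x\<in>UNIV. nat (Max (rs C2 x) - Min (rs C2 x)) \<le> nat (Max (rs C1 x) - Min (rs C1 x))"
          using lt rsC2 by (metis order.strict_implies_order order_refl)
        show "\<exists>a\<in>UNIV. nat (Max (rs C2 a) - Min (rs C2 a)) < nat (Max (rs C1 a) - Min (rs C1 a))"
          using lt by blast
      qed simp
      then have "mu C2 < m" using muC1 by simp
      then show ?thesis using less U2 unfolding C2_def by blast
    qed
  qed
qed


theorem mainTheorem6:
  fixes sF :: "'a::field_char_0 \<Rightarrow> 'a"
    and s :: "'a ratfun \<Rightarrow> 'a ratfun"
    and A :: "('a ratfun, 'n::finite) lmat"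
    and l :: nat
  assumes "PiSigma_ext sF s"
    and "\<forall>k. k < 0 \<or> k > int l \<longrightarrow> A k = 0"
    and "det (A (int l)) \<noteq> 0"
  shows "(\<exists>l' :: nat. \<exists>V. unimodular_laurent s V \<and>
            (\<forall>k. k < 0 \<or> k > int l' \<longrightarrow> lmult s V A k = 0) \<and>
            det (lmult s V A 0) \<noteq> 0)
         \<and> fully_regular s A l"
proof -
  have s: "field_aut s" using assms(1) by (simp add: PiSigma_ext_def)
  have "\<exists>V'. unimodular_laurent s V' \<and> ore_mat (lmult s V' A) \<and> det (lmult s V' A 0) \<noteq> 0"
    using reduce[OF s assms(2) assms(3), of "mu A"] unimodular_lone[of s] lmult_lone_left[of s A]
    by metis
  then obtain V' where V': "unimodular_laurent s V'" "ore_mat (lmult s V' A)" "det (lmult s V' A 0) \<noteq> 0"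
    by blast
  define C where "C = lmult s V' A"
  have fin: "finite (supp C)" using V'(2) by (simp add: C_def ore_mat_def lfin_supp)
  define l' where "l' = nat (Max (insert 0 (supp C)))"
  have "\<forall>k. k < 0 \<or> k > int l' \<longrightarrow> C k = 0"
  proof (intro allI impI)
    fix k assume k: "k < 0 \<or> k > int l'"
    show "C k = 0"
    proof (rule ccontr)
      assume "C k \<noteq> 0"
      then have "k \<in> supp C" by (simp add: supp_def)
      then have "k \<le> Max (insert 0 (supp C))" using fin by simp
      moreover have "k \<ge> 0" using V'(2) \<open>C k \<noteq> 0\<close> unfolding C_def ore_mat_def by (meson not_le)
      ultimately show False using k unfolding l'_def by linarith
    qed
  qed
  then show ?thesis
    using V' assms(2,3) unfolding C_def fully_regular_def head_regular_def by blast
qed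

end
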